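(* A group $G$ admits a nonzero homogeneous quasimorphism if and only if $G$ acts dominatingly on some quasi-total triple $(X,\preceq,T)$ (the action is not required to be effective, and the triple is not required to be complete).
   Context: A homogeneous quasimorphism is $f:G\to\mathbb{R}$ with $\sup_{h,k}|f(hk)-f(h)-f(k)|<\infty$ and $f(h^n)=nf(h)$ for $n\in\mathbb{N}$. For a poset $(X,\preceq)$, an order-preserving bijection $T$ is dominant if for all $a,b\in X$ there is $n\in\mathbb{N}$ with $T^na\succ b$. $(X,\preceq,T)$ is a quasi-total triple if $T$ is a dominant order-preserving bijection of $X$ and there is $N\in\mathbb{N}$ such that for all $a,b\in X$ some $k\in\{0,\dots,N\}$ satisfies $a\preceq T^kb$ or $b\preceq T^ka$. An action of $G$ on $(X,\preceq,T)$ is dominating if $G$ acts by order-preserving bijections commuting with $T$ and there exist $g\in G$, $x\in X$, $n\in\mathbb{N}$ with $g.x\succeq T^n.x$. *)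

theory Defs
  imports Complex_Main "HOL-Algebra.Group_Action"
begin

definition hom_quasimorphism :: "('g, 'b) monoid_scheme \<Rightarrow> ('g \<Rightarrow> real) \<Rightarrow> bool" where
  "hom_quasimorphism G f \<longleftrightarrow>
     (\<exists>D. \<forall>h\<in>carrier G. \<forall>k\<in>carrier G. \<bar>f (h \<otimes>\<^bsub>G\<^esub> k) - f h - f k\<bar> \<le> D) \<and>
     (\<forall>h\<in>carrier G. \<forall>n::nat. n \<ge> 1 \<longrightarrow> f (h [^]\<^bsub>G\<^esub> n) = real n * f h)"

definition poset_on :: "'x set \<Rightarrow> ('x \<Rightarrow> 'x \<Rightarrow> bool) \<Rightarrow> bool" where
  "poset_on X leq \<longleftrightarrow>
     (\<forall>a\<in>X. leq a a) \<and>
     (\<forall>a\<in>X. \<forall>b\<in>X. leq a b \<and> leq b a \<longrightarrow> a = b) \<and>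
     (\<forall>a\<in>X. \<forall>b\<in>X. \<forall>c\<in>X. leq a b \<and> leq b c \<longrightarrow> leq a c)"

definition order_preserving_bij :: "'x set \<Rightarrow> ('x \<Rightarrow> 'x \<Rightarrow> bool) \<Rightarrow> ('x \<Rightarrow> 'x) \<Rightarrow> bool" where
  "order_preserving_bij X leq T \<longleftrightarrow>
     bij_betw T X X \<and> (\<forall>a\<in>X. \<forall>b\<in>X. leq a b \<longrightarrow> leq (T a) (T b))"

definition dominant :: "'x set \<Rightarrow> ('x \<Rightarrow> 'x \<Rightarrow> bool) \<Rightarrow> ('x \<Rightarrow> 'x) \<Rightarrow> bool" where
  "dominant X leq T \<longleftrightarrow>
     (\<forall>a\<in>X. \<forall>b\<in>X. \<exists>n::nat. leq b ((T ^^ n) a) \<and> (T ^^ n) a \<noteq> b)"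

definition quasi_total_triple :: "'x set \<Rightarrow> ('x \<Rightarrow> 'x \<Rightarrow> bool) \<Rightarrow> ('x \<Rightarrow> 'x) \<Rightarrow> bool" where
  "quasi_total_triple X leq T \<longleftrightarrow>
     poset_on X leq \<and> order_preserving_bij X leq T \<and> dominant X leq T \<and>
     (\<exists>N::nat. \<forall>a\<in>X. \<forall>b\<in>X. \<exists>k\<in>{0..N}. leq a ((T ^^ k) b) \<or> leq b ((T ^^ k) a))"

definition dominating_action ::
  "('g, 'b) monoid_scheme \<Rightarrow> ('g \<Rightarrow> 'x \<Rightarrow> 'x) \<Rightarrow> 'x set \<Rightarrow> ('x \<Rightarrow> 'x \<Rightarrow> bool) \<Rightarrow> ('x \<Rightarrow> 'x) \<Rightarrow> bool" where
  "dominating_action G act X leq T \<longleftrightarrow>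
     group_action G X act \<and>
     (\<forall>g\<in>carrier G. order_preserving_bij X leq (act g)) \<and>
     (\<forall>g\<in>carrier G. \<forall>x\<in>X. act g (T x) = T (act g x)) \<and>
     (\<exists>g\<in>carrier G. \<exists>x\<in>X. \<exists>n::nat. n \<ge> 1 \<and> leq ((T ^^ n) x) (act g x))"

end

theory Submission
  imports Defs
begin


lemma small_tail:
  fixes C e :: real assumes "e > 0"
  shows "\<exists>M::nat. \<forall>m\<ge>M. C / (real m + 1) < e"
proof -
  obtain M::nat where M: "C < real M * e" using ex_less_of_nat_mult[OF assms] by blast
  have "C / (real m + 1) < e" if "m \<ge> M" for m
  proof -
    have "real M * e \<le> (real m + 1) * e" using that assms by (intro mult_right_mono) auto
    hence "C < (real m + 1) * e" using M by linarith
    thus ?thesis by (simp add: divide_less_eq add_pos_nonneg mult.commute)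
  qed
  thus ?thesis by blast
qed

lemma conv_from_bound:
  fixes x :: "nat \<Rightarrow> real"
  assumes "\<forall>n. \<bar>x n - a\<bar> \<le> C / (real n + 1)"
  shows "x \<longlonglongrightarrow> a"
proof (rule LIMSEQ_I)
  fix r :: real assume "0 < r"
  then obtain M where M: "\<forall>m\<ge>M. C / (real m + 1) < r" using small_tail by blast
  show "\<exists>no. \<forall>n\<ge>no. norm (x n - a) < r"
    using M assms by (metis order_le_less_trans real_norm_def)
qed

lemma approx_lim:
  fixes s :: "nat \<Rightarrow> real"
  assumes B: "\<And>n m. \<bar>s n - s m\<bar> \<le> C / (real n + 1) + C / (real m + 1)"
  shows "convergent s" "\<And>n. \<bar>s n - lim s\<bar> \<le> C / (real n + 1)"
proof -
  have "Cauchy s"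
  proof (rule CauchyI)
    fix e :: real assume "0 < e"
    then obtain M where M: "\<forall>m\<ge>M. C / (real m + 1) < e/2" using small_tail[of "e/2"] by auto
    show "\<exists>M. \<forall>m\<ge>M. \<forall>n\<ge>M. norm (s m - s n) < e"
    proof (intro exI allI impI)
      fix m n assume "m \<ge> M" "n \<ge> M"
      have "C / (real m + 1) < e/2" "C / (real n + 1) < e/2" using M \<open>m \<ge> M\<close> \<open>n \<ge> M\<close> by auto
      thus "norm (s m - s n) < e" using B[of m n] unfolding real_norm_def by linarith
    qed
  qed
  thus c: "convergent s" by (simp add: Cauchy_convergent_iff)
  hence L: "s \<longlonglongrightarrow> lim s" by (simp add: convergent_LIMSEQ_iff)
  fix n
  show "\<bar>s n - lim s\<bar> \<le> C / (real n + 1)"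
  proof (rule field_le_epsilon)
    fix e :: real assume e: "0 < e"
    then obtain M1 where M1: "\<forall>m\<ge>M1. C / (real m + 1) < e/2" using small_tail[of "e/2"] by auto
    from LIMSEQ_D[OF L, of "e/2"] e obtain M2 where M2: "\<forall>m\<ge>M2. norm (s m - lim s) < e/2" by auto
    let ?m = "max M1 M2"
    have "\<bar>s n - lim s\<bar> \<le> \<bar>s n - s ?m\<bar> + \<bar>s ?m - lim s\<bar>" by linarith
    moreover have "C / (real ?m + 1) < e/2" using M1 by simp
    moreover have "\<bar>s ?m - lim s\<bar> < e/2" using M2 by simp
    ultimately show "\<bar>s n - lim s\<bar> \<le> C / (real n + 1) + e"
      using B[of n ?m] by linarith
  qed
qed

lemma div_step:
  fixes A B D k j :: real
  assumes "\<bar>A - k*B\<bar> \<le> (k+1)*D" "k \<ge> 1" "j > 0" "D \<ge> 0"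
  shows "\<bar>A/(k*j) - B/j\<bar> \<le> 2*D/j"
proof -
  have kj: "k*j > 0" using assms by simp
  have "A/(k*j) - B/j = (A - k*B)/(k*j)" using assms by (simp add: field_simps)
  hence "\<bar>A/(k*j) - B/j\<bar> = \<bar>A - k*B\<bar>/(k*j)" using kj by simp
  also have "\<dots> \<le> (k+1)*D/(k*j)" using assms(1) kj by (simp add: divide_right_mono)
  also have "\<dots> \<le> (2*k*D)/(k*j)"
    using kj assms by (intro divide_right_mono) (auto intro: mult_right_mono)
  also have "\<dots> = 2*D/j" using assms by simp
  finally show ?thesis .
qed

definition hs :: "('g,'b) monoid_scheme \<Rightarrow> ('g \<Rightarrow> real) \<Rightarrow> 'g \<Rightarrow> nat \<Rightarrow> real" where
  "hs G q g n = q (g [^]\<^bsub>G\<^esub> Suc n) / (real n + 1)"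

definition hq :: "('g,'b) monoid_scheme \<Rightarrow> ('g \<Rightarrow> real) \<Rightarrow> 'g \<Rightarrow> real" where
  "hq G q g = lim (hs G q g)"

context group begin

lemma D_nonneg:
  fixes q :: "'a \<Rightarrow> real"
  assumes D: "\<And>h k. h \<in> carrier G \<Longrightarrow> k \<in> carrier G \<Longrightarrow> \<bar>q (h \<otimes> k) - q h - q k\<bar> \<le> D"
  shows "D \<ge> 0"
  using D[OF one_closed one_closed] abs_ge_zero[of "q (\<one> \<otimes> \<one>) - q \<one> - q \<one>"] by linarith

lemma qm_pow_bound:
  assumes D: "\<And>h k. h \<in> carrier G \<Longrightarrow> k \<in> carrier G \<Longrightarrow> \<bar>q (h \<otimes> k) - q h - q k\<bar> \<le> D"
    and g: "g \<in> carrier G"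
  shows "\<bar>q (g [^] n) - real n * q g\<bar> \<le> (real n + 1) * D"
proof (induction n)
  case 0
  have "\<bar>q \<one>\<bar> \<le> D" using D[of \<one> \<one>] by simp
  thus ?case by simp
next
  case (Suc n)
  have "\<bar>q (g [^] n \<otimes> g) - q (g [^] n) - q g\<bar> \<le> D" using D g by simp
  thus ?case using Suc by (simp add: algebra_simps)
qed

lemma hs_bound:
  assumes D: "\<And>h k. h \<in> carrier G \<Longrightarrow> k \<in> carrier G \<Longrightarrow> \<bar>q (h \<otimes> k) - q h - q k\<bar> \<le> D"
    and g: "g \<in> carrier G"
  shows "\<bar>hs G q g n - hs G q g m\<bar> \<le> 2*D / (real n + 1) + 2*D / (real m + 1)"
proof -
  have D0: "D \<ge> 0" using D_nonneg D by blast
  let ?w = "q (g [^] (Suc n * Suc m)) / ((real m + 1) * (real n + 1))"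
  have e1: "(g [^] Suc n) [^] Suc m = g [^] (Suc n * Suc m)" by (simp only: nat_pow_pow[OF g])
  have e2: "(g [^] Suc m) [^] Suc n = g [^] (Suc n * Suc m)" by (metis nat_pow_pow g mult.commute)
  have b1: "\<bar>q (g [^] (Suc n * Suc m)) - (real m + 1) * q (g [^] Suc n)\<bar> \<le> ((real m + 1)+1) * D"
    using qm_pow_bound[OF D nat_pow_closed[OF g], of "Suc n" "Suc m"] unfolding e1 by (simp add: algebra_simps)
  have b2: "\<bar>q (g [^] (Suc n * Suc m)) - (real n + 1) * q (g [^] Suc m)\<bar> \<le> ((real n + 1)+1) * D"
    using qm_pow_bound[OF D nat_pow_closed[OF g], of "Suc m" "Suc n"] unfolding e2 by (simp add: algebra_simps)
  have c1: "\<bar>?w - hs G q g n\<bar> \<le> 2*D/(real n + 1)"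
    unfolding hs_def using div_step[OF b1 _ _ D0] by simp
  have c2: "\<bar>q (g [^] (Suc n * Suc m)) / ((real n + 1) * (real m + 1)) - hs G q g m\<bar> \<le> 2*D/(real m + 1)"
    unfolding hs_def using div_step[OF b2 _ _ D0] by simp
  have "?w = q (g [^] (Suc n * Suc m)) / ((real n + 1) * (real m + 1))" by (simp add: mult.commute)
  thus ?thesis using c1 c2 by linarith
qed

lemma hq_props:
  assumes D: "\<And>h k. h \<in> carrier G \<Longrightarrow> k \<in> carrier G \<Longrightarrow> \<bar>q (h \<otimes> k) - q h - q k\<bar> \<le> D"
    and g: "g \<in> carrier G"
  shows "hs G q g \<longlonglongrightarrow> hq G q g" "\<And>n. \<bar>hs G q g n - hq G q g\<bar> \<le> 2*D / (real n + 1)"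
  using approx_lim[of "hs G q g" "2*D"] hs_bound[OF D g] convergent_LIMSEQ_iff unfolding hq_def
  by auto

lemma hq_close:
  assumes D: "\<And>h k. h \<in> carrier G \<Longrightarrow> k \<in> carrier G \<Longrightarrow> \<bar>q (h \<otimes> k) - q h - q k\<bar> \<le> D"
    and g: "g \<in> carrier G"
  shows "\<bar>q g - hq G q g\<bar> \<le> 2*D"
  using hq_props(2)[OF D g, of 0] g by (simp add: hs_def)

lemma hq_pow:
  assumes D: "\<And>h k. h \<in> carrier G \<Longrightarrow> k \<in> carrier G \<Longrightarrow> \<bar>q (h \<otimes> k) - q h - q k\<bar> \<le> D"
    and g: "g \<in> carrier G" and k: "k \<ge> 1"
  shows "hq G q (g [^] k) = real k * hq G q g"
proof -
  let ?L = "hq G q g"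
  have "\<bar>hs G q (g [^] k) n - real k * ?L\<bar> \<le> 2*D / (real n + 1)" for n
  proof -
    define p where "p = k * Suc n - 1"
    have p: "Suc p = k * Suc n" using k unfolding p_def by (cases k) auto
    have rp: "real p + 1 = real k * (real n + 1)" using arg_cong[OF p, of real] by (simp add: algebra_simps)
    have "hs G q (g [^] k) n = q (g [^] (k * Suc n)) / (real n + 1)"
      unfolding hs_def by (simp only: nat_pow_pow[OF g])
    also have "\<dots> = real k * hs G q g p" unfolding hs_def p[symmetric] rp using k by simp
    finally have eq: "hs G q (g [^] k) n = real k * hs G q g p" .
    have "\<bar>hs G q g p - ?L\<bar> \<le> 2*D / (real p + 1)" by (rule hq_props(2)[OF D g])
    hence "real k * \<bar>hs G q g p - ?L\<bar> \<le> real k * (2*D / (real k * (real n + 1)))"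
      unfolding rp by (intro mult_left_mono) auto
    also have "\<dots> = 2*D / (real n + 1)" using k by simp
    finally show ?thesis unfolding eq
      by (metis abs_mult abs_of_nat right_diff_distrib)
  qed
  hence "hs G q (g [^] k) \<longlonglongrightarrow> real k * ?L" by (intro conv_from_bound) auto
  moreover have "hs G q (g [^] k) \<longlonglongrightarrow> hq G q (g [^] k)" using hq_props(1)[OF D] g by simp
  ultimately show ?thesis using LIMSEQ_unique by blast
qed

lemma homogenize:
  assumes D: "\<And>h k. h \<in> carrier G \<Longrightarrow> k \<in> carrier G \<Longrightarrow> \<bar>q (h \<otimes> k) - q h - q k\<bar> \<le> D"
    and g0: "g0 \<in> carrier G" and c: "c > 0"
    and low: "\<And>k::nat. q (g0 [^] k) \<ge> real k * c - B"
  shows "\<exists>f. hom_quasimorphism G f \<and> (\<exists>h\<in>carrier G. f h \<noteq> 0)"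
proof (intro exI conjI)
  let ?f = "hq G q"
  show "hom_quasimorphism G ?f"
    unfolding hom_quasimorphism_def
  proof (intro conjI exI ballI allI impI)
    fix h k assume h: "h \<in> carrier G" and k: "k \<in> carrier G"
    have "\<bar>q (h \<otimes> k) - ?f (h \<otimes> k)\<bar> \<le> 2*D" using hq_close[OF D] h k by simp
    moreover have "\<bar>q h - ?f h\<bar> \<le> 2*D" using hq_close[OF D] h by simp
    moreover have "\<bar>q k - ?f k\<bar> \<le> 2*D" using hq_close[OF D] k by simp
    moreover have "\<bar>q (h \<otimes> k) - q h - q k\<bar> \<le> D" using D h k by simp
    ultimately show "\<bar>?f (h \<otimes> k) - ?f h - ?f k\<bar> \<le> 7*D" by linarith
  next
    fix h and n :: nat assume "h \<in> carrier G" "1 \<le> n"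
    thus "?f (h [^] n) = real n * ?f h" using hq_pow[OF D] by blast
  qed
  show "\<exists>h\<in>carrier G. ?f h \<noteq> 0"
  proof (intro bexI[OF _ g0] notI)
    assume f0: "?f g0 = 0"
    obtain n where n: "B + 2*D < real n * c" using ex_less_of_nat_mult[OF c] by blast
    have "?f (g0 [^] Suc n) = 0" using hq_pow[OF D g0, of "Suc n"] f0 by simp
    hence "q (g0 [^] Suc n) \<le> 2*D" using hq_close[OF D, of "g0 [^] Suc n"] g0 by simp
    moreover have "q (g0 [^] Suc n) \<ge> real (Suc n) * c - B" by (rule low)
    moreover have "real n * c \<le> real (Suc n) * c" using c by simp
    ultimately show False using n by linarith
  qed
qed

end




locale qtt =
  fixes X :: "'x set" and leq :: "'x \<Rightarrow> 'x \<Rightarrow> bool" and T :: "'x \<Rightarrow> 'x" and N :: nat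
  assumes refl: "a \<in> X \<Longrightarrow> leq a a"
    and antisym: "a \<in> X \<Longrightarrow> b \<in> X \<Longrightarrow> leq a b \<Longrightarrow> leq b a \<Longrightarrow> a = b"
    and trans: "a \<in> X \<Longrightarrow> b \<in> X \<Longrightarrow> c \<in> X \<Longrightarrow> leq a b \<Longrightarrow> leq b c \<Longrightarrow> leq a c"
    and Tin: "a \<in> X \<Longrightarrow> T a \<in> X"
    and Tmono: "a \<in> X \<Longrightarrow> b \<in> X \<Longrightarrow> leq a b \<Longrightarrow> leq (T a) (T b)"
    and dom: "a \<in> X \<Longrightarrow> b \<in> X \<Longrightarrow> \<exists>n. leq b ((T ^^ n) a) \<and> (T ^^ n) a \<noteq> b"
    and qt: "a \<in> X \<Longrightarrow> b \<in> X \<Longrightarrow> \<exists>k\<le>N. leq a ((T ^^ k) b) \<or> leq b ((T ^^ k) a)"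
begin

lemma Tn_in: "a \<in> X \<Longrightarrow> (T ^^ n) a \<in> X"
  by (induction n) (auto simp: Tin)

lemma Tn_mono: "a \<in> X \<Longrightarrow> b \<in> X \<Longrightarrow> leq a b \<Longrightarrow> leq ((T ^^ n) a) ((T ^^ n) b)"
  by (induction n) (auto simp: Tmono Tn_in)

lemma Tn_add: "(T ^^ i) ((T ^^ j) a) = (T ^^ (i + j)) a"
  by (simp add: funpow_add)

lemma noback:
  assumes a: "a \<in> X" and m: "m \<ge> 1" and le: "leq ((T ^^ m) a) a"
  shows False
proof -
  obtain n where n1: "leq a ((T ^^ n) a)" and n2: "(T ^^ n) a \<noteq> a" using dom[OF a a] by blast
  have c1: "leq ((T ^^ (k * m)) a) a" for k
  proof (induction k)
    case 0 show ?case using a refl by simp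
  next
    case (Suc k)
    have "(T ^^ (Suc k * m)) a = (T ^^ (k*m)) ((T ^^ m) a)" by (simp add: Tn_add add.commute)
    moreover have "leq ((T ^^ (k*m)) ((T ^^ m) a)) ((T ^^ (k*m)) a)" using Tn_mono le a Tn_in by blast
    ultimately show ?case using trans[OF Tn_in[OF Tn_in[OF a]] Tn_in[OF a] a _ Suc] by simp
  qed
  have c2: "leq ((T ^^ n) a) ((T ^^ (Suc k * n)) a) \<and> leq a ((T ^^ (Suc k * n)) a)" for k
  proof (induction k)
    case 0 show ?case using a refl n1 Tn_in by simp
  next
    case (Suc k)
    have e: "(T ^^ (Suc (Suc k) * n)) a = (T ^^ (Suc k * n)) ((T ^^ n) a)" by (simp add: Tn_add add.commute)
    have "leq ((T ^^ (Suc k * n)) a) ((T ^^ (Suc k * n)) ((T ^^ n) a))" using Tn_mono n1 a Tn_in by blast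
    hence "leq ((T ^^ (Suc k * n)) a) ((T ^^ (Suc (Suc k) * n)) a)" using e by simp
    thus ?case using Suc trans[OF Tn_in[OF a] Tn_in[OF a] Tn_in[OF a]] trans[OF a Tn_in[OF a] Tn_in[OF a]] by blast
  qed
  obtain m' where m': "m = Suc m'" using m by (cases m) auto
  have A: "leq ((T ^^ n) a) ((T ^^ (m * n)) a)" using c2[of m'] m' by simp
  have B: "leq ((T ^^ (m * n)) a) a" using c1[of n] by (simp add: mult.commute)
  have "leq ((T ^^ n) a) a" using trans[OF Tn_in[OF a] Tn_in[OF a] a A B] .
  hence "(T ^^ n) a = a" using antisym n1 a Tn_in by blast
  thus False using n2 by simp
qed

lemma G1: assumes a: "a \<in> X" and le: "leq ((T ^^ i) a) ((T ^^ j) a)" shows "i \<le> j"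
proof (rule ccontr)
  assume "\<not> i \<le> j"
  define d where "d = i - j"
  have d: "i = d + j" "d \<ge> 1" using \<open>\<not> i \<le> j\<close> unfolding d_def by auto
  have "(T ^^ i) a = (T ^^ d) ((T ^^ j) a)" using d by (simp add: Tn_add)
  thus False using noback[OF Tn_in[OF a] d(2)] le by simp
qed

definition Q :: "'x \<Rightarrow> 'x \<Rightarrow> int \<Rightarrow> bool" where
  "Q a b m \<longleftrightarrow> (\<exists>i j::nat. int j - int i \<le> m \<and> leq ((T ^^ i) b) ((T ^^ j) a))"

lemma Q_mono: "Q a b m \<Longrightarrow> m \<le> m' \<Longrightarrow> Q a b m'"
  unfolding Q_def by force

lemma Q_trans:
  assumes X: "a \<in> X" "b \<in> X" "c \<in> X" and ab: "Q a b m" and bc: "Q b c m'"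
  shows "Q a c (m + m')"
proof -
  obtain i j where ij: "int j - int i \<le> m" "leq ((T ^^ i) b) ((T ^^ j) a)" using ab unfolding Q_def by blast
  obtain i' j' where ij': "int j' - int i' \<le> m'" "leq ((T ^^ i') c) ((T ^^ j') b)" using bc unfolding Q_def by blast
  have 1: "leq ((T ^^ (i + i')) c) ((T ^^ (i + j')) b)"
    using Tn_mono[OF Tn_in[OF X(3)] Tn_in[OF X(2)] ij'(2), of i] by (simp add: Tn_add)
  have 2: "leq ((T ^^ (i + j')) b) ((T ^^ (j + j')) a)"
    using Tn_mono[OF Tn_in[OF X(2)] Tn_in[OF X(1)] ij(2), of j'] by (simp add: Tn_add add.commute)
  have "leq ((T ^^ (i + i')) c) ((T ^^ (j + j')) a)" using trans[OF _ _ _ 1 2] Tn_in X by blast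
  moreover have "int (j + j') - int (i + i') \<le> m + m'" using ij ij' by simp
  ultimately show ?thesis unfolding Q_def by blast
qed

lemma Q_compat:
  assumes X: "a \<in> X" "b \<in> X" and ab: "Q a b m" and ba: "Q b a m'"
  shows "0 \<le> m + m'"
proof -
  have "Q a a (m + m')" using Q_trans[OF X(1) X(2) X(1) ab ba] .
  then obtain i j where "int j - int i \<le> m + m'" "leq ((T ^^ i) a) ((T ^^ j) a)" unfolding Q_def by blast
  thus ?thesis using G1[OF X(1)] by fastforce
qed

lemma Q_dom: "a \<in> X \<Longrightarrow> b \<in> X \<Longrightarrow> \<exists>n::nat. Q a b (int n)"
proof -
  assume X: "a \<in> X" "b \<in> X"
  obtain n where "leq b ((T ^^ n) a)" using dom[OF X] by blast
  hence "Q a b (int n)" unfolding Q_def by (intro exI[of _ 0] exI[of _ n]) simp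
  thus ?thesis by blast
qed

lemma QT:
  assumes X: "a \<in> X" "b \<in> X"
  shows "Q a b (t + int N) \<or> Q b a (int N - t)"
proof -
  define p where "p = nat (- t)"
  define q where "q = nat t"
  have pq: "int q - int p = t" unfolding p_def q_def by simp
  obtain k where k: "k \<le> N" and
    c: "leq ((T ^^ p) b) ((T ^^ k) ((T ^^ q) a)) \<or> leq ((T ^^ q) a) ((T ^^ k) ((T ^^ p) b))"
    using qt[OF Tn_in[OF X(2)] Tn_in[OF X(1)]] by blast
  show ?thesis
  proof (cases "leq ((T ^^ p) b) ((T ^^ k) ((T ^^ q) a))")
    case True
    hence "leq ((T ^^ p) b) ((T ^^ (k + q)) a)" by (simp add: Tn_add)
    moreover have "int (k + q) - int p \<le> t + int N" using pq k by simp
    ultimately show ?thesis unfolding Q_def by blast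
  next
    case False
    hence "leq ((T ^^ q) a) ((T ^^ (k + p)) b)" using c by (simp add: Tn_add)
    moreover have "int (k + p) - int q \<le> int N - t" using pq k by simp
    ultimately show ?thesis unfolding Q_def by blast
  qed
qed

lemma abs3: "0 \<le> A + c + (B + c) + (- C + c) \<Longrightarrow> 0 \<le> C + c + (- B + c) + (- A + c) \<Longrightarrow> \<bar>C - A - B\<bar> \<le> 3 * (c::int)"
  by (simp add: abs_le_iff)

definition L :: "'x \<Rightarrow> 'x \<Rightarrow> nat" where
  "L a b = (LEAST k::nat. Q a b (int k))"

definition Dd :: "'x \<Rightarrow> 'x \<Rightarrow> int" where
  "Dd a b = int (L a b) - int (L b a)"

lemma L_Q: "a \<in> X \<Longrightarrow> b \<in> X \<Longrightarrow> Q a b (int (L a b))"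
  unfolding L_def using Q_dom by (metis LeastI_ex)

lemma L_min: "k < L a b \<Longrightarrow> \<not> Q a b (int k)"
  unfolding L_def by (rule not_less_Least)

lemma Down:
  assumes X: "a \<in> X" "b \<in> X"
  shows "Q b a (- Dd a b + (2 * int N + 1))"
proof (cases "L a b = 0")
  case True
  thus ?thesis using L_Q[OF X(2) X(1)] unfolding Dd_def by (auto intro: Q_mono)
next
  case False
  hence nq: "\<not> Q a b (int (L a b - 1))" using L_min[of "L a b - 1" a b] by simp
  have "Q a b ((int (L a b) - 1 - int N) + int N) \<or> Q b a (int N - (int (L a b) - 1 - int N))"
    using QT[OF X] by blast
  moreover have "int (L a b - 1) = (int (L a b) - 1 - int N) + int N" using False by simp
  ultimately have "Q b a (int N - (int (L a b) - 1 - int N))" using nq by simp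
  thus ?thesis unfolding Dd_def by (rule Q_mono) simp
qed

lemma Up:
  assumes X: "a \<in> X" "b \<in> X"
  shows "Q a b (Dd a b + (2 * int N + 1))"
proof -
  have "Dd a b = - Dd b a" unfolding Dd_def by simp
  thus ?thesis using Down[OF X(2) X(1)] by simp
qed

lemma Dd_add:
  assumes X: "a \<in> X" "b \<in> X" "c \<in> X"
  shows "\<bar>Dd a c - Dd a b - Dd b c\<bar> \<le> 3 * (2 * int N + 1)"
proof -
  let ?c = "2 * int N + 1"
  have "Q a c (Dd a b + ?c + (Dd b c + ?c))" using Q_trans[OF X Up[OF X(1,2)] Up[OF X(2,3)]] .
  from Q_compat[OF X(1) X(3) this Down[OF X(1,3)]]
  have 1: "0 \<le> Dd a b + ?c + (Dd b c + ?c) + (- Dd a c + ?c)" .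
  have "Q a b (Dd a c + ?c + (- Dd b c + ?c))" using Q_trans[OF X(1,3,2) Up[OF X(1,3)] Down[OF X(2,3)]] .
  from Q_compat[OF X(1) X(2) this Down[OF X(1,2)]]
  have 2: "0 \<le> Dd a c + ?c + (- Dd b c + ?c) + (- Dd a b + ?c)" .
  show ?thesis using abs3[OF 1 2] .
qed

end




lemma (in group) dir2:
  assumes qtt: "quasi_total_triple X leq T"
    and da: "dominating_action G act X leq T"
  shows "\<exists>f. hom_quasimorphism G f \<and> (\<exists>h\<in>carrier G. f h \<noteq> 0)"
proof -
  obtain N where N: "\<forall>a\<in>X. \<forall>b\<in>X. \<exists>k\<in>{0..N}. leq a ((T ^^ k) b) \<or> leq b ((T ^^ k) a)"
    using qtt unfolding quasi_total_triple_def by blast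
  have po: "poset_on X leq" and opT: "order_preserving_bij X leq T" and dT: "dominant X leq T"
    using qtt unfolding quasi_total_triple_def by auto
  interpret Qt: qtt X leq T N
  proof
    show "\<And>a. a \<in> X \<Longrightarrow> leq a a" using po unfolding poset_on_def by blast
    show "\<And>a b. a \<in> X \<Longrightarrow> b \<in> X \<Longrightarrow> leq a b \<Longrightarrow> leq b a \<Longrightarrow> a = b" using po unfolding poset_on_def by blast
    show "\<And>a b c. a \<in> X \<Longrightarrow> b \<in> X \<Longrightarrow> c \<in> X \<Longrightarrow> leq a b \<Longrightarrow> leq b c \<Longrightarrow> leq a c"
      using po unfolding poset_on_def by blast
    show "\<And>a. a \<in> X \<Longrightarrow> T a \<in> X" using opT unfolding order_preserving_bij_def by (meson bij_betw_apply)
    show "\<And>a b. a \<in> X \<Longrightarrow> b \<in> X \<Longrightarrow> leq a b \<Longrightarrow> leq (T a) (T b)" using opT unfolding order_preserving_bij_def by blast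
    show "\<And>a b. a \<in> X \<Longrightarrow> b \<in> X \<Longrightarrow> \<exists>n. leq b ((T ^^ n) a) \<and> (T ^^ n) a \<noteq> b" using dT unfolding dominant_def by blast
    show "\<And>a b. a \<in> X \<Longrightarrow> b \<in> X \<Longrightarrow> \<exists>k\<le>N. leq a ((T ^^ k) b) \<or> leq b ((T ^^ k) a)" using N by fastforce
  qed
  have ga: "group_action G X act" using da unfolding dominating_action_def by blast
  interpret ga: group_action G X act by (rule ga)
  have act_in: "\<And>g x. g \<in> carrier G \<Longrightarrow> x \<in> X \<Longrightarrow> act g x \<in> X" using ga.element_image by blast
  have act_mono: "\<And>g a b. g \<in> carrier G \<Longrightarrow> a \<in> X \<Longrightarrow> b \<in> X \<Longrightarrow> leq a b \<Longrightarrow> leq (act g a) (act g b)"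
    using da unfolding dominating_action_def order_preserving_bij_def by blast
  have act_comm: "\<And>g x. g \<in> carrier G \<Longrightarrow> x \<in> X \<Longrightarrow> act g (T x) = T (act g x)"
    using da unfolding dominating_action_def by blast
  have act_comm_n: "act g ((T ^^ n) x) = (T ^^ n) (act g x)" if "g \<in> carrier G" "x \<in> X" for g x n
    using that by (induction n) (auto simp: act_comm Qt.Tn_in)
  have act_one: "\<And>x. x \<in> X \<Longrightarrow> act \<one> x = x"
    using fun_cong[OF ga.id_eq_one[symmetric]] by simp
  have act_inv: "act (inv g) (act g x) = x" if "g \<in> carrier G" "x \<in> X" for g x
    using ga.composition_rule[of x "inv g" g] that act_one by simp
  have Q_inv: "Qt.Q (act g a) (act g b) m \<longleftrightarrow> Qt.Q a b m" if g: "g \<in> carrier G" and X: "a \<in> X" "b \<in> X" for g a b m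
  proof
    assume "Qt.Q (act g a) (act g b) m"
    then obtain i j where ij: "int j - int i \<le> m" "leq ((T ^^ i) (act g b)) ((T ^^ j) (act g a))"
      unfolding Qt.Q_def by blast
    hence "leq (act g ((T ^^ i) b)) (act g ((T ^^ j) a))" using act_comm_n g X by simp
    hence "leq (act (inv g) (act g ((T ^^ i) b))) (act (inv g) (act g ((T ^^ j) a)))"
      using act_mono[of "inv g"] g X act_in Qt.Tn_in by simp
    hence "leq ((T ^^ i) b) ((T ^^ j) a)" using act_inv g X Qt.Tn_in by simp
    thus "Qt.Q a b m" using ij(1) unfolding Qt.Q_def by blast
  next
    assume "Qt.Q a b m"
    then obtain i j where ij: "int j - int i \<le> m" "leq ((T ^^ i) b) ((T ^^ j) a)"
      unfolding Qt.Q_def by blast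
    hence "leq (act g ((T ^^ i) b)) (act g ((T ^^ j) a))" using act_mono g X Qt.Tn_in by simp
    hence "leq ((T ^^ i) (act g b)) ((T ^^ j) (act g a))" using act_comm_n g X by simp
    thus "Qt.Q (act g a) (act g b) m" using ij(1) unfolding Qt.Q_def by blast
  qed
  have L_inv: "Qt.L (act g a) (act g b) = Qt.L a b" if "g \<in> carrier G" "a \<in> X" "b \<in> X" for g a b
    unfolding Qt.L_def using Q_inv[OF that] by simp
  have Dd_inv: "Qt.Dd (act g a) (act g b) = Qt.Dd a b" if "g \<in> carrier G" "a \<in> X" "b \<in> X" for g a b
    unfolding Qt.Dd_def using L_inv that by simp
  obtain g0 x0 n0 where g0: "g0 \<in> carrier G" and x0: "x0 \<in> X" and n0: "n0 \<ge> 1"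
    and le0: "leq ((T ^^ n0) x0) (act g0 x0)"
    using da unfolding dominating_action_def by blast
  define q where "q g = real_of_int (Qt.Dd x0 (act g x0))" for g
  let ?c = "2 * int N + 1"
  have defect: "\<bar>q (g \<otimes> h) - q g - q h\<bar> \<le> real_of_int (3 * ?c)" if g: "g \<in> carrier G" and h: "h \<in> carrier G" for g h
  proof -
    have e: "act (g \<otimes> h) x0 = act g (act h x0)" using ga.composition_rule x0 g h by simp
    have "\<bar>Qt.Dd x0 (act g (act h x0)) - Qt.Dd x0 (act g x0) - Qt.Dd (act g x0) (act g (act h x0))\<bar> \<le> 3 * ?c"
      by (rule Qt.Dd_add) (use x0 g h act_in in auto)
    moreover have "Qt.Dd (act g x0) (act g (act h x0)) = Qt.Dd x0 (act h x0)"
      using Dd_inv g h x0 act_in by simp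
    ultimately have "\<bar>Qt.Dd x0 (act (g \<otimes> h) x0) - Qt.Dd x0 (act g x0) - Qt.Dd x0 (act h x0)\<bar> \<le> 3 * ?c"
      using e by simp
    hence "real_of_int \<bar>Qt.Dd x0 (act (g \<otimes> h) x0) - Qt.Dd x0 (act g x0) - Qt.Dd x0 (act h x0)\<bar> \<le> real_of_int (3 * ?c)"
      by linarith
    thus ?thesis unfolding q_def by simp
  qed
  have pw: "leq ((T ^^ (k * n0)) x0) (act (g0 [^] k) x0)" for k
  proof (induction k)
    case 0 show ?case using act_one x0 Qt.refl by simp
  next
    case (Suc k)
    have gk: "g0 [^] k \<in> carrier G" using g0 by simp
    have e: "act (g0 [^] Suc k) x0 = act (g0 [^] k) (act g0 x0)" using ga.composition_rule x0 g0 gk by simp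
    have 1: "leq (act (g0 [^] k) ((T ^^ n0) x0)) (act (g0 [^] k) (act g0 x0))"
      using act_mono[OF gk _ _ le0] x0 g0 Qt.Tn_in act_in by blast
    have 2: "act (g0 [^] k) ((T ^^ n0) x0) = (T ^^ n0) (act (g0 [^] k) x0)" using act_comm_n gk x0 by blast
    have 3: "leq ((T ^^ n0) ((T ^^ (k * n0)) x0)) ((T ^^ n0) (act (g0 [^] k) x0))"
      using Qt.Tn_mono[OF Qt.Tn_in[OF x0] act_in[OF gk x0] Suc] .
    have 4: "(T ^^ n0) ((T ^^ (k * n0)) x0) = (T ^^ (Suc k * n0)) x0" by (simp add: Qt.Tn_add)
    show ?case using Qt.trans[OF _ _ _ 3 1[unfolded 2]] 4 e Qt.Tn_in x0 act_in gk g0 by simp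
  qed
  have low: "q (g0 [^] k) \<ge> real k * 1 - real_of_int ?c" for k :: nat
  proof -
    have gk: "g0 [^] k \<in> carrier G" using g0 by simp
    have "Qt.Q (act (g0 [^] k) x0) x0 (- int (k * n0))"
      unfolding Qt.Q_def using pw[of k] by (intro exI[of _ "k * n0"] exI[of _ 0]) simp
    from Qt.Q_compat[OF x0 act_in[OF gk x0] Qt.Up[OF x0 act_in[OF gk x0]] this]
    have "int (k * n0) \<le> Qt.Dd x0 (act (g0 [^] k) x0) + ?c" by simp
    moreover have "k \<le> k * n0" using n0 by simp
    ultimately have "int k \<le> Qt.Dd x0 (act (g0 [^] k) x0) + ?c" by linarith
    hence "real_of_int (int k) \<le> real_of_int (Qt.Dd x0 (act (g0 [^] k) x0) + ?c)"
      by (simp only: of_int_le_iff)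
    hence "real k \<le> real_of_int (Qt.Dd x0 (act (g0 [^] k) x0)) + real_of_int ?c" by simp
    thus ?thesis unfolding q_def by simp
  qed
  show ?thesis
    by (rule homogenize[OF defect g0 _ low]) auto
qed




lemma zero_from_bound:
  fixes x B :: real
  assumes "\<And>n::nat. n \<ge> 1 \<Longrightarrow> real n * \<bar>x\<bar> \<le> B"
  shows "x = 0"
proof (rule ccontr)
  assume "x \<noteq> 0"
  hence "\<bar>x\<bar> > 0" by simp
  then obtain n::nat where n: "B < real n * \<bar>x\<bar>" using ex_less_of_nat_mult by blast
  have "real n * \<bar>x\<bar> \<le> real (Suc n) * \<bar>x\<bar>" by (simp add: mult_right_mono)
  thus False using assms[of "Suc n"] n by simp
qed

context group begin

lemma qm_facts:
  assumes hqm: "hom_quasimorphism G f"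
  obtains D where "D \<ge> 0" "\<And>h k. h \<in> carrier G \<Longrightarrow> k \<in> carrier G \<Longrightarrow> \<bar>f (h \<otimes> k) - f h - f k\<bar> \<le> D"
    "f \<one> = 0"
    "\<And>g n. g \<in> carrier G \<Longrightarrow> f (g [^] (n::nat)) = real n * f g"
    "\<And>g. g \<in> carrier G \<Longrightarrow> f (inv g) = - f g"
    "\<And>z w. z \<in> carrier G \<Longrightarrow> w \<in> carrier G \<Longrightarrow> f (inv z \<otimes> w \<otimes> z) = f w"
proof -
  obtain D where D: "\<And>h k. h \<in> carrier G \<Longrightarrow> k \<in> carrier G \<Longrightarrow> \<bar>f (h \<otimes> k) - f h - f k\<bar> \<le> D"
    using hqm unfolding hom_quasimorphism_def by blast
  have hom: "\<And>g n. g \<in> carrier G \<Longrightarrow> n \<ge> 1 \<Longrightarrow> f (g [^] (n::nat)) = real n * f g"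
    using hqm unfolding hom_quasimorphism_def by blast
  have D0: "D \<ge> 0" by (rule D_nonneg[OF D])
  have f1: "f \<one> = 0" using hom[of \<one> 2] by simp
  have pw: "f (g [^] (n::nat)) = real n * f g" if "g \<in> carrier G" for g n
    using hom[OF that] f1 by (cases "n = 0") auto
  have fi: "f (inv g) = - f g" if g: "g \<in> carrier G" for g
  proof -
    have "real n * \<bar>f g + f (inv g)\<bar> \<le> D" if "n \<ge> 1" for n :: nat
    proof -
      have e: "g [^] n \<otimes> (inv g) [^] n = \<one>" using g by (simp add: nat_pow_inv)
      have "\<bar>f (g [^] n \<otimes> (inv g) [^] n) - f (g [^] n) - f ((inv g) [^] n)\<bar> \<le> D" using D g by simp
      hence "\<bar>- (real n * f g) - real n * f (inv g)\<bar> \<le> D" using e f1 pw g by simp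
      moreover have "- (real n * f g) - real n * f (inv g) = - (real n * (f g + f (inv g)))"
        by (simp add: algebra_simps)
      ultimately show ?thesis by (simp add: abs_mult)
    qed
    hence "f g + f (inv g) = 0" by (rule zero_from_bound)
    thus ?thesis by linarith
  qed
  have fc: "f (inv z \<otimes> w \<otimes> z) = f w" if z: "z \<in> carrier G" and w: "w \<in> carrier G" for z w
  proof -
    have cp: "(inv z \<otimes> w \<otimes> z) [^] n = inv z \<otimes> w [^] n \<otimes> z" for n :: nat
    proof (induction n)
      case 0 show ?case using z by simp
    next
      case (Suc n)
      have c: "z \<otimes> (inv z \<otimes> y) = y" if "y \<in> carrier G" for y using z that by (simp add: m_assoc[symmetric])
      have "(inv z \<otimes> w \<otimes> z) [^] Suc n = inv z \<otimes> w [^] n \<otimes> z \<otimes> (inv z \<otimes> w \<otimes> z)" using Suc by simp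
      also have "\<dots> = inv z \<otimes> (w [^] n \<otimes> (z \<otimes> (inv z \<otimes> (w \<otimes> z))))" using z w by (simp add: m_assoc)
      also have "\<dots> = inv z \<otimes> (w [^] n \<otimes> (w \<otimes> z))" using c z w by simp
      also have "\<dots> = inv z \<otimes> w [^] Suc n \<otimes> z" using z w by (simp add: m_assoc)
      finally show ?case .
    qed
    have "real n * \<bar>f (inv z \<otimes> w \<otimes> z) - f w\<bar> \<le> 2 * D" if "n \<ge> 1" for n :: nat
    proof -
      have 1: "\<bar>f (inv z \<otimes> w [^] n \<otimes> z) - f (inv z \<otimes> w [^] n) - f z\<bar> \<le> D" using D z w by simp
      have 2: "\<bar>f (inv z \<otimes> w [^] n) - f (inv z) - f (w [^] n)\<bar> \<le> D" using D z w by simp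
      have 3: "f (inv z \<otimes> w [^] n \<otimes> z) = real n * f (inv z \<otimes> w \<otimes> z)" using cp[of n] pw[of "inv z \<otimes> w \<otimes> z" n] z w by simp
      have 4: "f (w [^] n) = real n * f w" using pw w by simp
      have "\<bar>real n * f (inv z \<otimes> w \<otimes> z) - real n * f w\<bar> \<le> 2 * D" using 1 2 3 4 fi[OF z] by linarith
      moreover have "real n * f (inv z \<otimes> w \<otimes> z) - real n * f w = real n * (f (inv z \<otimes> w \<otimes> z) - f w)"
        by (simp add: right_diff_distrib)
      ultimately show ?thesis by (simp add: abs_mult)
    qed
    hence "f (inv z \<otimes> w \<otimes> z) - f w = 0" by (rule zero_from_bound)
    thus ?thesis by simp
  qed
  show ?thesis using that[OF D0 D f1 pw fi fc] .
qed

end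




context group begin

lemma inv_mult_inv: "x \<in> carrier G \<Longrightarrow> y \<in> carrier G \<Longrightarrow> inv (inv x \<otimes> y) = inv y \<otimes> x"
  by (simp add: inv_mult_group)

lemma dir1:
  assumes hqm: "hom_quasimorphism G f" and h: "h \<in> carrier G" and fh: "f h \<noteq> 0"
  shows "\<exists>(X::'a set) leq T act. quasi_total_triple X leq T \<and> dominating_action G act X leq T"
proof -
  obtain D where D0: "D \<ge> 0"
    and D: "\<And>h k. h \<in> carrier G \<Longrightarrow> k \<in> carrier G \<Longrightarrow> \<bar>f (h \<otimes> k) - f h - f k\<bar> \<le> D"
    and f1: "f \<one> = 0"
    and pw: "\<And>g n. g \<in> carrier G \<Longrightarrow> f (g [^] (n::nat)) = real n * f g"
    and fi: "\<And>g. g \<in> carrier G \<Longrightarrow> f (inv g) = - f g"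
    and fc: "\<And>z w. z \<in> carrier G \<Longrightarrow> w \<in> carrier G \<Longrightarrow> f (inv z \<otimes> w \<otimes> z) = f w"
    using qm_facts[OF hqm] by blast
  have lowD: "f (a \<otimes> b) \<ge> f a + f b - D" if "a \<in> carrier G" "b \<in> carrier G" for a b
    using D[OF that] by linarith
  define h' where "h' = (if f h > 0 then h else inv h)"
  have h'c: "h' \<in> carrier G" using h unfolding h'_def by simp
  have fh': "f h' > 0" using fh fi[OF h] unfolding h'_def by auto
  obtain m :: nat where m: "3 * D < real m * f h'" using ex_less_of_nat_mult[OF fh'] by blast
  define z where "z = h' [^] m"
  have zc: "z \<in> carrier G" using h'c unfolding z_def by simp
  have fz: "f z > 3 * D" using m pw[OF h'c] unfolding z_def by simp
  define leq where "leq x y \<longleftrightarrow> x = y \<or> D < f (inv x \<otimes> y)" for x y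
  define T where "T x = x \<otimes> z" for x
  define act where "act g = (\<lambda>x\<in>carrier G. g \<otimes> x)" for g
  have Tn: "(T ^^ n) x = x \<otimes> z [^] n" if "x \<in> carrier G" for x n
    using that by (induction n) (auto simp: T_def m_assoc zc)
  have po: "poset_on (carrier G) leq"
    unfolding poset_on_def
  proof (intro conjI ballI impI)
    fix a assume "a \<in> carrier G" thus "leq a a" unfolding leq_def by simp
  next
    fix a b assume ab: "a \<in> carrier G" "b \<in> carrier G" and l: "leq a b \<and> leq b a"
    show "a = b"
    proof (rule ccontr)
      assume ne: "a \<noteq> b"
      hence "D < f (inv a \<otimes> b)" "D < f (inv b \<otimes> a)" using l ne unfolding leq_def by auto
      moreover have "f (inv b \<otimes> a) = - f (inv a \<otimes> b)" using fi[of "inv a \<otimes> b"] ab inv_mult_inv by simp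
      ultimately show False using D0 by linarith
    qed
  next
    fix a b c assume abc: "a \<in> carrier G" "b \<in> carrier G" "c \<in> carrier G" and l: "leq a b \<and> leq b c"
    show "leq a c"
    proof (cases "a = b \<or> b = c")
      case True thus ?thesis using l by auto
    next
      case False
      hence 1: "D < f (inv a \<otimes> b)" "D < f (inv b \<otimes> c)" using l unfolding leq_def by auto
      have e: "inv a \<otimes> c = (inv a \<otimes> b) \<otimes> (inv b \<otimes> c)" using abc
        by (simp add: m_assoc[symmetric]) (simp add: m_assoc)
      have "f (inv a \<otimes> c) \<ge> f (inv a \<otimes> b) + f (inv b \<otimes> c) - D" unfolding e using lowD abc by simp
      thus ?thesis unfolding leq_def using 1 by linarith
    qed
  qed
  have opT: "order_preserving_bij (carrier G) leq T"
    unfolding order_preserving_bij_def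
  proof (intro conjI ballI impI)
    show "bij_betw T (carrier G) (carrier G)"
      by (rule bij_betwI[where g = "\<lambda>x. x \<otimes> inv z"]) (auto simp: T_def zc m_assoc)
  next
    fix a b assume ab: "a \<in> carrier G" "b \<in> carrier G" and l: "leq a b"
    have "inv (T a) \<otimes> T b = inv z \<otimes> (inv a \<otimes> b) \<otimes> z"
      unfolding T_def using ab zc by (simp add: inv_mult_group m_assoc)
    hence "f (inv (T a) \<otimes> T b) = f (inv a \<otimes> b)" using fc zc ab by simp
    thus "leq (T a) (T b)" using l unfolding leq_def by auto
  qed
  have dT: "dominant (carrier G) leq T"
    unfolding dominant_def
  proof (intro ballI)
    fix a b assume ab: "a \<in> carrier G" "b \<in> carrier G"
    let ?w = "inv b \<otimes> a"
    have fz0: "f z > 0" using fz D0 by linarith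
    obtain n :: nat where n: "2 * D - f ?w < real n * f z" using ex_less_of_nat_mult[OF fz0] by blast
    have e: "inv b \<otimes> (T ^^ n) a = ?w \<otimes> z [^] n" using Tn ab zc by (simp add: m_assoc)
    have "f (?w \<otimes> z [^] n) \<ge> f ?w + f (z [^] n) - D" using lowD ab zc by simp
    hence big: "f (inv b \<otimes> (T ^^ n) a) > D" using e n pw[OF zc] by simp
    have "(T ^^ n) a \<noteq> b"
    proof
      assume "(T ^^ n) a = b"
      hence "inv b \<otimes> (T ^^ n) a = \<one>" using ab by simp
      thus False using big f1 D0 by simp
    qed
    thus "\<exists>n. leq b ((T ^^ n) a) \<and> (T ^^ n) a \<noteq> b" using big unfolding leq_def by blast
  qed
  have qtN: "\<forall>a\<in>carrier G. \<forall>b\<in>carrier G. \<exists>k\<in>{0..1::nat}. leq a ((T ^^ k) b) \<or> leq b ((T ^^ k) a)"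
  proof (intro ballI)
    fix a b assume ab: "a \<in> carrier G" "b \<in> carrier G"
    have gen: "leq y (T x)" if xy: "x \<in> carrier G" "y \<in> carrier G" and nn: "f (inv y \<otimes> x) \<ge> 0" for x y
    proof -
      have "f (inv y \<otimes> (x \<otimes> z)) = f ((inv y \<otimes> x) \<otimes> z)" using xy zc by (simp add: m_assoc)
      also have "\<dots> \<ge> f (inv y \<otimes> x) + f z - D" using lowD xy zc by simp
      finally show ?thesis unfolding leq_def T_def using nn fz D0 by auto
    qed
    have fs: "f (inv a \<otimes> b) = - f (inv b \<otimes> a)" using fi[of "inv b \<otimes> a"] ab inv_mult_inv by simp
    show "\<exists>k\<in>{0..1::nat}. leq a ((T ^^ k) b) \<or> leq b ((T ^^ k) a)"
    proof (cases "f (inv b \<otimes> a) \<ge> 0")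
      case True thus ?thesis using gen[OF ab(1) ab(2)] by (intro bexI[of _ 1]) auto
    next
      case False thus ?thesis using gen[OF ab(2) ab(1)] fs by (intro bexI[of _ 1]) auto
    qed
  qed
  have qtt: "quasi_total_triple (carrier G) leq T"
    unfolding quasi_total_triple_def using po opT dT qtN by blast
  have actB: "act g \<in> Bij (carrier G)" if g: "g \<in> carrier G" for g
    unfolding Bij_def act_def
  proof
    show "(\<lambda>x\<in>carrier G. g \<otimes> x) \<in> extensional (carrier G)" by simp
    have "bij_betw (\<lambda>x\<in>carrier G. g \<otimes> x) (carrier G) (carrier G)"
      by (rule bij_betwI[where g = "\<lambda>x. inv g \<otimes> x"]) (auto simp: g m_assoc[symmetric])
    thus "(\<lambda>x\<in>carrier G. g \<otimes> x) \<in> {f. bij_betw f (carrier G) (carrier G)}" by simp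
  qed
  have ga: "group_action G (carrier G) act"
    unfolding group_action_def group_hom_def group_hom_axioms_def hom_def
  proof (intro conjI)
    show "group G" by (rule is_group)
    show "group (BijGroup (carrier G))" by (rule group_BijGroup)
    show "act \<in> {h \<in> carrier G \<rightarrow> carrier (BijGroup (carrier G)).
        \<forall>x\<in>carrier G. \<forall>y\<in>carrier G. h (x \<otimes> y) = h x \<otimes>\<^bsub>BijGroup (carrier G)\<^esub> h y}"
    proof (intro CollectI conjI ballI funcsetI)
      fix x assume "x \<in> carrier G" thus "act x \<in> carrier (BijGroup (carrier G))"
        using actB by (simp add: BijGroup_def)
    next
      fix x y assume xy: "x \<in> carrier G" "y \<in> carrier G"
      have "act x \<otimes>\<^bsub>BijGroup (carrier G)\<^esub> act y = compose (carrier G) (act x) (act y)"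
        using actB xy by (simp add: BijGroup_def)
      also have "\<dots> = act (x \<otimes> y)"
        unfolding compose_def act_def using xy by (auto simp: m_assoc intro!: restrict_ext)
      finally show "act (x \<otimes> y) = act x \<otimes>\<^bsub>BijGroup (carrier G)\<^esub> act y" by simp
    qed
  qed
  have da: "dominating_action G act (carrier G) leq T"
    unfolding dominating_action_def
  proof (intro conjI ballI)
    show "group_action G (carrier G) act" by (rule ga)
  next
    fix g assume g: "g \<in> carrier G"
    show "order_preserving_bij (carrier G) leq (act g)"
      unfolding order_preserving_bij_def
    proof (intro conjI ballI impI)
      show "bij_betw (act g) (carrier G) (carrier G)" using actB[OF g] by (simp add: Bij_def)
    next
      fix a b assume ab: "a \<in> carrier G" "b \<in> carrier G" and l: "leq a b"
      have "inv (g \<otimes> a) \<otimes> (g \<otimes> b) = inv a \<otimes> b" using g ab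
        by (simp add: inv_mult_group m_assoc) (simp add: m_assoc[symmetric])
      thus "leq (act g a) (act g b)" using l ab unfolding leq_def act_def by auto
    qed
  next
    fix g x assume g: "g \<in> carrier G" and x: "x \<in> carrier G"
    show "act g (T x) = T (act g x)" unfolding act_def T_def using g x zc by (simp add: m_assoc)
  next
    have "leq ((T ^^ 1) \<one>) (act z \<one>)" unfolding leq_def act_def T_def using zc by simp
    thus "\<exists>g\<in>carrier G. \<exists>x\<in>carrier G. \<exists>n::nat. n \<ge> 1 \<and> leq ((T ^^ n) x) (act g x)"
      using zc by blast
  qed
  show ?thesis using qtt da by blast
qed

end



theorem corollary1p9:
  fixes G :: "('g, 'b) monoid_scheme"
  assumes "group G"
  shows "((\<exists>f. hom_quasimorphism G f \<and> (\<exists>h\<in>carrier G. f h \<noteq> 0)) \<longrightarrow>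
            (\<exists>(X :: 'g set) leq T act. quasi_total_triple X leq T \<and> dominating_action G act X leq T))
       \<and> ((\<exists>(X :: 'x set) leq T act. quasi_total_triple X leq T \<and> dominating_action G act X leq T) \<longrightarrow>
            (\<exists>f. hom_quasimorphism G f \<and> (\<exists>h\<in>carrier G. f h \<noteq> 0)))"
proof (intro conjI impI)
  assume "\<exists>f. hom_quasimorphism G f \<and> (\<exists>h\<in>carrier G. f h \<noteq> 0)"
  then obtain f h where "hom_quasimorphism G f" "h \<in> carrier G" "f h \<noteq> 0" by blast
  thus "\<exists>(X :: 'g set) leq T act. quasi_total_triple X leq T \<and> dominating_action G act X leq T"
    using group.dir1[OF assms] by blast
next
  assume "\<exists>(X :: 'x set) leq T act. quasi_total_triple X leq T \<and> dominating_action G act X leq T"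
  then obtain X :: "'x set" and leq T act where "quasi_total_triple X leq T" "dominating_action G act X leq T"
    by blast
  thus "\<exists>f. hom_quasimorphism G f \<and> (\<exists>h\<in>carrier G. f h \<noteq> 0)"
    using group.dir2[OF assms] by blast
qed

end
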